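(* Consider the two-player, two-item all-pay auction with budgets described in the context, with profile $(B_1,B_2,v_{11},v_{12},v_{21},v_{22})$. Suppose $B_1=B_2$ and $v_{11}=v_{12}=v_{21}=v_{22}$, and let $c=\min\{v_{11},B_1\}$. For $i\in\{1,2\}$ let player $i$'s mixed strategy be the probability distribution supported on the segment $\{(x_{i1},x_{i2}): x_{i1},x_{i2}\in[0,c],\ x_{i2}=-x_{i1}+c\}$ with constant density $f_i(x_{i1},x_{i2})=\frac{1}{\sqrt2\,c}$ with respect to arc length on that segment. Then this strategy profile $(f_1,f_2)$ is a Nash equilibrium.
   Context: Multi-item all-pay auction with budgets. Two players $i\in\{1,2\}$ ($-i$ is the opponent of $i$) and $n$ items $j\in\{1,\dots,n\}$. Player $i$ has budget $B_i\ge0$ and values item $j$ at $v_{ij}>0$. A pure strategy of player $i$ is a vector $(x_{i1},\dots,x_{in})$ with all $x_{ij}\ge0$ and $\sum_j x_{ij}\le B_i$; a mixed strategy is a probability distribution over this set. On each item $j$ the higher bid wins the item. Tie-breaking on item $j$: if $x_{1j}=x_{2j}=\min\{B_1,B_2,v_{1j},v_{2j}\}$ and $\min\{B_i,v_{ij}\}>\min\{B_{-i},v_{-ij}\}$ for some $i$, then player $i$ wins item $j$; in all other ties each player wins item $j$ with probability $\frac12$. Player $i$'s utility on item $j$ is $v_{ij}-x_{ij}$ if he wins it and $-x_{ij}$ otherwise, and his total utility is the sum over items. A Nash equilibrium is a pair of mixed strategies in which each player's strategy maximizes his expected total utility against the other's, over all mixed strategies satisfying his budget constraint. Here $n=2$.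 *)

theory Defs
  imports "HOL-Probability.Probability"
begin

text \<open>Players are 1 and 2 (opponent of i is 3 - i), items are 1 and 2.
  Budgets B :: nat => real (B i), values v :: nat => nat => real (v i j).\<close>

definition bid :: "real \<times> real \<Rightarrow> nat \<Rightarrow> real" where
  "bid x j = (if j = 1 then fst x else snd x)"

definition feasible :: "(nat \<Rightarrow> real) \<Rightarrow> nat \<Rightarrow> real \<times> real \<Rightarrow> bool" where
  "feasible B i x \<longleftrightarrow> fst x \<ge> 0 \<and> snd x \<ge> 0 \<and> fst x + snd x \<le> B i"

definition win_prob :: "(nat \<Rightarrow> real) \<Rightarrow> (nat \<Rightarrow> nat \<Rightarrow> real) \<Rightarrow> nat \<Rightarrow> nat \<Rightarrow> real \<Rightarrow> real \<Rightarrow> real" where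
  "win_prob B v i j a b =
    (let m = min (min (B 1) (B 2)) (min (v 1 j) (v 2 j));
         ci = min (B i) (v i j); co = min (B (3 - i)) (v (3 - i) j)
     in if a > b then 1
        else if a < b then 0
        else if a = m \<and> ci > co then 1
        else if a = m \<and> co > ci then 0
        else 1 / 2)"

definition utility :: "(nat \<Rightarrow> real) \<Rightarrow> (nat \<Rightarrow> nat \<Rightarrow> real) \<Rightarrow> nat \<Rightarrow> real \<times> real \<Rightarrow> real \<times> real \<Rightarrow> real" where
  "utility B v i x y = (\<Sum>j\<in>{1,2::nat}. win_prob B v i j (bid x j) (bid y j) * v i j - bid x j)"

definition mixed_strategy :: "(nat \<Rightarrow> real) \<Rightarrow> nat \<Rightarrow> (real \<times> real) measure \<Rightarrow> bool" where
  "mixed_strategy B i \<sigma> \<longleftrightarrow> prob_space \<sigma> \<and> sets \<sigma> = sets (borel :: (real \<times> real) measure)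
     \<and> (AE x in \<sigma>. feasible B i x)"

definition exp_utility :: "(nat \<Rightarrow> real) \<Rightarrow> (nat \<Rightarrow> nat \<Rightarrow> real) \<Rightarrow> nat \<Rightarrow> (real \<times> real) measure \<Rightarrow> (real \<times> real) measure \<Rightarrow> real" where
  "exp_utility B v i \<sigma> \<tau> = (\<integral>x. (\<integral>y. utility B v i x y \<partial>\<tau>) \<partial>\<sigma>)"

definition nash_eq :: "(nat \<Rightarrow> real) \<Rightarrow> (nat \<Rightarrow> nat \<Rightarrow> real) \<Rightarrow> (real \<times> real) measure \<Rightarrow> (real \<times> real) measure \<Rightarrow> bool" where
  "nash_eq B v \<sigma>1 \<sigma>2 \<longleftrightarrow>
     mixed_strategy B 1 \<sigma>1 \<and> mixed_strategy B 2 \<sigma>2 \<and>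
     (\<forall>\<sigma>. mixed_strategy B 1 \<sigma> \<longrightarrow> exp_utility B v 1 \<sigma> \<sigma>2 \<le> exp_utility B v 1 \<sigma>1 \<sigma>2) \<and>
     (\<forall>\<sigma>. mixed_strategy B 2 \<sigma> \<longrightarrow> exp_utility B v 2 \<sigma> \<sigma>1 \<le> exp_utility B v 2 \<sigma>2 \<sigma>1)"

text \<open>The distribution on the segment {(x1,x2). x1,x2 in [0,c], x2 = c - x1} with constant
  density 1/(sqrt 2 * c) with respect to arc length: arc length s in [0, sqrt 2 * c]
  parametrises the point (s / sqrt 2, c - s / sqrt 2).\<close>
definition segment_strategy :: "real \<Rightarrow> (real \<times> real) measure" where
  "segment_strategy c =
     distr (density (restrict_space lborel {0 .. sqrt 2 * c}) (\<lambda>s. ennreal (1 / (sqrt 2 * c))))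
           borel (\<lambda>s. (s / sqrt 2, c - s / sqrt 2))"

end

theory Submission
  imports Defs
begin


definition w :: "real \<Rightarrow> real \<Rightarrow> real" where
  "w a b = (if a > b then 1 else if a < b then 0 else 1/2)"

lemma w_meas[measurable]: "(\<lambda>t. w a (f t)) \<in> borel_measurable M" if [measurable]: "f \<in> borel_measurable M"
  unfolding w_def by measurable

lemma w_meas2[measurable]: "(\<lambda>t. w (g t) (f t)) \<in> borel_measurable M" if [measurable]: "f \<in> borel_measurable M" "g \<in> borel_measurable M"
  unfolding w_def by measurable

lemma seg_transform:
  fixes h :: "real \<times> real \<Rightarrow> real"
  assumes c: "c > 0" and h[measurable]: "h \<in> borel_measurable borel"
  shows "(\<integral>y. h y \<partial>segment_strategy c) = (1/c) * (\<integral>t. indicator {0..c} t * h (t, c - t) \<partial>lborel)"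
proof -
  let ?L = "sqrt 2 * c"
  let ?M = "restrict_space lborel {0..?L}"
  have T: "(\<lambda>s::real. (s / sqrt 2, c - s / sqrt 2)) \<in> measurable (density ?M (\<lambda>s. ennreal (1 / ?L))) borel"
    by (subst measurable_cong_sets[OF sets_density refl]) (auto intro: measurable_restrict_space1)
  have "(\<integral>y. h y \<partial>segment_strategy c) = (\<integral>s. h (s / sqrt 2, c - s / sqrt 2) \<partial>density ?M (\<lambda>s. ennreal (1 / ?L)))"
    unfolding segment_strategy_def by (rule integral_distr[OF T h])
  also have "\<dots> = (\<integral>s. (1 / ?L) *\<^sub>R h (s / sqrt 2, c - s / sqrt 2) \<partial>?M)"
    using c by (intro integral_density) (auto intro: measurable_restrict_space1)
  also have "\<dots> = (\<integral>s. indicator {0..?L} s *\<^sub>R ((1 / ?L) *\<^sub>R h (s / sqrt 2, c - s / sqrt 2)) \<partial>lborel)"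
    by (rule integral_restrict_space) auto
  also have "\<dots> = \<bar>sqrt 2\<bar> *\<^sub>R (\<integral>x. indicator {0..?L} (0 + sqrt 2 * x) *\<^sub>R ((1 / ?L) *\<^sub>R h ((0 + sqrt 2 * x) / sqrt 2, c - (0 + sqrt 2 * x) / sqrt 2)) \<partial>lborel)"
    by (rule lborel_integral_real_affine) simp
  also have "\<dots> = sqrt 2 * (\<integral>x. (1 / ?L) * (indicator {0..c} x * h (x, c - x)) \<partial>lborel)"
  proof -
    have eq: "\<And>x. indicator {0..?L} (0 + sqrt 2 * x) *\<^sub>R ((1 / ?L) *\<^sub>R h ((0 + sqrt 2 * x) / sqrt 2, c - (0 + sqrt 2 * x) / sqrt 2))
       = (1 / ?L) * (indicator {0..c} x * h (x, c - x))"
      using c by (auto simp: indicator_def zero_le_mult_iff)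
    show ?thesis by (simp only: eq) simp
  qed
  also have "\<dots> = (1/c) * (\<integral>t. indicator {0..c} t * h (t, c - t) \<partial>lborel)"
    using c by simp
  finally show ?thesis .
qed

lemma meas_Icc: "measure lborel {l..u::real} = max 0 (u - l)"
  by (cases "l \<le> u") auto

lemma int_Icc[simp]: "integrable lborel (indicator {l..u::real} :: real \<Rightarrow> real)"
  by (simp add: integrable_indicator_iff emeasure_lborel_Icc_eq)

definition G :: "real \<Rightarrow> real \<Rightarrow> real \<times> real \<Rightarrow> real" where
  "G c V x = V / c * (max 0 (min c (fst x)) + max 0 (min c (snd x))) - fst x - snd x"

lemma inner:
  assumes c: "c > 0"
  shows "(\<integral>y. V * (w (fst x) (fst y) + w (snd x) (snd y)) - fst x - snd x \<partial>segment_strategy c) = G c V x"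
proof -
  obtain a b where x: "x = (a, b)" by (cases x)
  have "(\<integral>y. V * (w (fst x) (fst y) + w (snd x) (snd y)) - fst x - snd x \<partial>segment_strategy c)
     = (1/c) * (\<integral>t. indicator {0..c} t * (V * (w a t + w b (c - t)) - a - b) \<partial>lborel)"
  proof -
    have m: "(\<lambda>y. V * (w a (fst y) + w b (snd y)) - a - b) \<in> borel_measurable borel" unfolding borel_prod[symmetric] by measurable
    show ?thesis unfolding x fst_conv snd_conv by (subst seg_transform[OF c m]) simp
  qed
  also have "(\<integral>t. indicator {0..c} t * (V * (w a t + w b (c - t)) - a - b) \<partial>lborel)
     = (\<integral>t. V * indicator {0..min c a} t + V * indicator {max 0 (c - b)..c} t - (a + b) * indicator {0..c} t \<partial>lborel)"
  proof (rule integral_cong_AE)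
    show "AE t in lborel. indicator {0..c} t * (V * (w a t + w b (c - t)) - a - b)
       = V * indicator {0..min c a} t + V * indicator {max 0 (c - b)..c} t - (a + b) * indicator {0..c} t"
      using AE_lborel_singleton[of a] AE_lborel_singleton[of "c - b"]
      by eventually_elim (auto simp: indicator_def w_def algebra_simps)
  qed auto
  also have "\<dots> = V * max 0 (min c a) + V * max 0 (min c b) - (a + b) * c"
    using c by (simp add: meas_Icc max_def min_def)
  finally show ?thesis using c unfolding x G_def by (simp add: field_simps max_def min_def)
qed

lemma seg_T: "(\<lambda>s::real. (s / sqrt 2, c - s / sqrt 2)) \<in> measurable (density (restrict_space lborel {0..sqrt 2 * c}) (\<lambda>s. ennreal (1 / (sqrt 2 * c)))) borel"
  by (subst measurable_cong_sets[OF sets_density refl]) (auto intro: measurable_restrict_space1)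

lemma seg_AE:
  assumes c: "c > 0" and P: "Measurable.pred borel P" and PP: "\<And>t. 0 \<le> t \<Longrightarrow> t \<le> c \<Longrightarrow> P (t, c - t)"
  shows "AE x in segment_strategy c. P x"
  unfolding segment_strategy_def
proof (subst AE_distr_iff[OF seg_T])
  show "{x \<in> space borel. P x} \<in> sets borel" using P by (simp add: pred_def)
  show "AE s in density (restrict_space lborel {0..sqrt 2 * c}) (\<lambda>s. ennreal (1 / (sqrt 2 * c))). P (s / sqrt 2, c - s / sqrt 2)"
  proof (subst AE_density)
    show "AE s in restrict_space lborel {0..sqrt 2 * c}. 0 < ennreal (1 / (sqrt 2 * c)) \<longrightarrow> P (s / sqrt 2, c - s / sqrt 2)"
    proof (subst AE_restrict_space_iff, simp, rule AE_I2, intro impI)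
      fix s assume s: "s \<in> {0..sqrt 2 * c}"
      have "0 \<le> s / sqrt 2" "s / sqrt 2 \<le> c" using s by (auto simp: field_simps)
      then show "P (s / sqrt 2, c - s / sqrt 2)" by (rule PP)
    qed
  qed auto
qed

lemma seg_prob: assumes c: "c > 0" shows "prob_space (segment_strategy c)"
proof
  have m: "(\<lambda>y::real\<times>real. 1::real) \<in> borel_measurable borel" by simp
  have "(\<integral>y. 1 \<partial>segment_strategy c) = (1/c) * (\<integral>t. indicator {0..c} t * 1 \<partial>lborel)"
    by (rule seg_transform[OF c m])
  also have "\<dots> = 1" using c by simp
  finally have 1: "measure (segment_strategy c) (space (segment_strategy c)) = 1" by simp
  then have "emeasure (segment_strategy c) (space (segment_strategy c)) \<noteq> top"
    by (auto simp: measure_def)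
  then show "emeasure (segment_strategy c) (space (segment_strategy c)) = 1"
    using 1 emeasure_eq_ennreal_measure by fastforce
qed

lemma G_seg: assumes c: "c > 0" shows "(\<integral>x. G c V x \<partial>segment_strategy c) = V - c"
proof -
  have m: "G c V \<in> borel_measurable borel" unfolding G_def borel_prod[symmetric] by measurable
  have "(\<integral>x. G c V x \<partial>segment_strategy c) = (1/c) * (\<integral>t. indicator {0..c} t * G c V (t, c - t) \<partial>lborel)"
    by (rule seg_transform[OF c m])
  also have "(\<integral>t. indicator {0..c} t * G c V (t, c - t) \<partial>lborel) = (\<integral>t. (V - c) * indicator {0..c} t \<partial>lborel)"
  proof -
    have eq: "\<And>t. indicator {0..c} t * G c V (t, c - t) = (V - c) * indicator {0..c} t"
      using c by (auto simp: indicator_def G_def field_simps)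
    show ?thesis by (simp only: eq)
  qed
  also have "(1/c) * \<dots> = V - c" using c by simp
  finally show ?thesis .
qed

lemma G_le:
  assumes c: "c = min V B" "V > 0" "B > 0" and x: "0 \<le> fst x" "0 \<le> snd x" "fst x + snd x \<le> B"
  shows "G c V x \<le> V - c"
proof (cases "V \<le> B")
  case True
  then have "c = V" using c by simp
  then show ?thesis using c x by (simp add: G_def)
next
  case False
  then have cB: "c = B" using c by simp
  have "G c V x = (V / c - 1) * (fst x + snd x)" using x cB c by (simp add: G_def min_def field_simps)
  also have "\<dots> \<le> (V / c - 1) * c" using False cB x c by (intro mult_left_mono) (auto simp: field_simps)
  also have "\<dots> = V - c" using cB c by (simp add: field_simps)
  finally show ?thesis .
qed

lemma util:
  assumes "B 1 = B 2"
    and "v 1 1 = v 1 2" and "v 1 2 = v 2 1" and "v 2 1 = v 2 2" and i: "i = 1 \<or> i = 2"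
  shows "utility B v i x y = v 1 1 * (w (fst x) (fst y) + w (snd x) (snd y)) - fst x - snd x"
  using i
proof
  assume "i = 1"
  then show ?thesis using assms(1-4) unfolding utility_def win_prob_def bid_def w_def Let_def
    by (simp add: numeral_2_eq_2)
next
  assume "i = 2"
  then show ?thesis using assms(1-4) unfolding utility_def win_prob_def bid_def w_def Let_def
    by (simp add: numeral_2_eq_2)
qed

theorem theorem2:
  fixes B :: "nat \<Rightarrow> real" and v :: "nat \<Rightarrow> nat \<Rightarrow> real" and c :: real
  assumes "B 1 = B 2"
    and "v 1 1 = v 1 2" and "v 1 2 = v 2 1" and "v 2 1 = v 2 2"
    and "v 1 1 > 0" and "B 1 > 0"
    and "c = min (v 1 1) (B 1)"
  shows "nash_eq B v (segment_strategy c) (segment_strategy c)"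
proof -
  have c: "c > 0" using assms by simp
  have eu: "exp_utility B v i \<sigma> (segment_strategy c) = (\<integral>x. G c (v 1 1) x \<partial>\<sigma>)" if i: "i = 1 \<or> i = 2" for i \<sigma>
    unfolding exp_utility_def util[OF assms(1-4) i] inner[OF c] ..
  have ms: "mixed_strategy B i (segment_strategy c)" if i: "i = 1 \<or> i = 2" for i
    unfolding mixed_strategy_def
  proof (intro conjI)
    show "prob_space (segment_strategy c)" by (rule seg_prob[OF c])
    show "sets (segment_strategy c) = sets borel" by (simp add: segment_strategy_def)
    show "AE x in segment_strategy c. feasible B i x"
    proof (rule seg_AE[OF c])
      show "Measurable.pred borel (feasible B i)"
        unfolding feasible_def borel_prod[symmetric] by measurable
      fix t assume "0 \<le> t" "t \<le> c"
      then show "feasible B i (t, c - t)" using assms i by (auto simp: feasible_def)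
    qed
  qed
  have dev: "exp_utility B v i \<sigma> (segment_strategy c) \<le> exp_utility B v i (segment_strategy c) (segment_strategy c)"
    if i: "i = 1 \<or> i = 2" and \<sigma>: "mixed_strategy B i \<sigma>" for i \<sigma>
  proof -
    have val: "exp_utility B v i (segment_strategy c) (segment_strategy c) = v 1 1 - c"
      unfolding eu[OF i] by (rule G_seg[OF c])
    interpret prob_space \<sigma> using \<sigma> by (simp add: mixed_strategy_def)
    have AE: "AE x in \<sigma>. G c (v 1 1) x \<le> v 1 1 - c"
    proof -
      have fe: "AE x in \<sigma>. feasible B i x" using \<sigma> by (simp add: mixed_strategy_def)
      then show ?thesis
    proof (eventually_elim)
      case (elim x)
      have "B i = B 1" using i assms by auto
      then show ?case using elim assms by (intro G_le[where B="B 1"]) (auto simp: feasible_def)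
    qed
    qed
    have "(\<integral>x. G c (v 1 1) x \<partial>\<sigma>) \<le> v 1 1 - c"
    proof (cases "integrable \<sigma> (G c (v 1 1))")
      case True
      have "(\<integral>x. G c (v 1 1) x \<partial>\<sigma>) \<le> (\<integral>x. v 1 1 - c \<partial>\<sigma>)"
        by (rule integral_mono_AE[OF True _ AE]) simp
      then show ?thesis by (simp add: prob_space)
    next
      case False
      then show ?thesis using assms by (simp add: not_integrable_integral_eq)
    qed
    then show ?thesis using val eu[OF i, of \<sigma>] by simp
  qed
  show ?thesis unfolding nash_eq_def using ms dev by auto
qed

end
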